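(* Fix $l,r>0$, $0<\alpha<\beta<1$ and diffusion constants $D_1\neq D_2$, and let $\delta=\frac{D_2-D_1}{D_2+D_1}$. For every $Q_0\in\mathbb{R}$ there is a unique $A(Q_0)\in(0,A_M)$ with $G_2(Q_0,A(Q_0),\delta)=0$. Furthermore $\lim_{Q_0\to\pm\infty}A(Q_0)=l$. Let $Q_0^*=Q_0^-$ if $\delta>0$ and $Q_0^*=Q_0^+$ if $\delta<0$, where $Q_0^-<0$ (for $\delta>0$) is the number such that $\partial_{Q_0}A$ has the same sign as $l-r$ for $Q_0>Q_0^-$ and the opposite sign for $Q_0<Q_0^-$, and $Q_0^+>0$ (for $\delta<0$) is the number such that $\partial_{Q_0}A$ has the sign opposite to $l-r$ for $Q_0<Q_0^+$ and the same sign for $Q_0>Q_0^+$. Then for all $Q_0\in\mathbb{R}$: (a) if $l<r$ then $l\le A(Q_0)\le A(Q_0^* )$; (b) if $l>r$ then $A(Q_0^* )\le A(Q_0)\le l$; (c) if $l=r$ then $A(Q_0)=l=r=A(Q_0^* )$.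
   Context: Setting: reduction of the steady zero-current Poisson–Nernst–Planck problem for two ion species with valences $\pm1$; $l,r>0$ are boundary concentrations, the permanent charge is $2Q_0$ on $(a,b)$ and $0$ elsewhere in $(0,1)$, $\alpha=H(a)/H(1)$, $\beta=H(b)/H(1)$ with $H(x)=\int_0^x ds/h(s)$, $h>0$ the cross-sectional area. For $Q_0\in\mathbb{R}$, $A>0$ define $B=\frac{1-\beta}{\alpha}(l-A)+r$, $A_M=l+\frac{\alpha}{1-\beta}r$, $S_a=\sqrt{Q_0^2+A^2}$, $S_b=\sqrt{Q_0^2+B^2}$, $N=A-l+S_a-S_b$, and $G_2(Q_0,A,\delta)=\delta Q_0\ln\frac{S_a+\delta Q_0}{S_b+\delta Q_0}-N$. *)

theory Defs
  imports "HOL-Analysis.Analysis"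
begin

text \<open>Quantities of the zero-current PNP reduction. Parameters: boundary
concentrations l r, alpha = H(a)/H(1), beta = H(b)/H(1), permanent charge
parameter Q0, unknown A, and delta.\<close>

definition Bq :: "real \<Rightarrow> real \<Rightarrow> real \<Rightarrow> real \<Rightarrow> real \<Rightarrow> real" where
  "Bq l r \<alpha> \<beta> A = (1 - \<beta>) / \<alpha> * (l - A) + r"

definition AM :: "real \<Rightarrow> real \<Rightarrow> real \<Rightarrow> real \<Rightarrow> real" where
  "AM l r \<alpha> \<beta> = l + \<alpha> / (1 - \<beta>) * r"

definition Sa :: "real \<Rightarrow> real \<Rightarrow> real" where
  "Sa Q0 A = sqrt (Q0\<^sup>2 + A\<^sup>2)"

definition Sb :: "real \<Rightarrow> real \<Rightarrow> real \<Rightarrow> real \<Rightarrow> real \<Rightarrow> real \<Rightarrow> real" where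
  "Sb l r \<alpha> \<beta> Q0 A = sqrt (Q0\<^sup>2 + (Bq l r \<alpha> \<beta> A)\<^sup>2)"

definition Nq :: "real \<Rightarrow> real \<Rightarrow> real \<Rightarrow> real \<Rightarrow> real \<Rightarrow> real \<Rightarrow> real" where
  "Nq l r \<alpha> \<beta> Q0 A = A - l + Sa Q0 A - Sb l r \<alpha> \<beta> Q0 A"

definition G2 :: "real \<Rightarrow> real \<Rightarrow> real \<Rightarrow> real \<Rightarrow> real \<Rightarrow> real \<Rightarrow> real \<Rightarrow> real" where
  "G2 l r \<alpha> \<beta> Q0 A \<delta> =
     \<delta> * Q0 * ln ((Sa Q0 A + \<delta> * Q0) / (Sb l r \<alpha> \<beta> Q0 A + \<delta> * Q0))
     - Nq l r \<alpha> \<beta> Q0 A"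

text \<open>The root A(Q0) in (0, A_M) (meaningful once uniqueness is known).\<close>
definition Aroot :: "real \<Rightarrow> real \<Rightarrow> real \<Rightarrow> real \<Rightarrow> real \<Rightarrow> real \<Rightarrow> real" where
  "Aroot l r \<alpha> \<beta> \<delta> Q0 =
     (THE A. 0 < A \<and> A < AM l r \<alpha> \<beta> \<and> G2 l r \<alpha> \<beta> Q0 A \<delta> = 0)"

definition is_Qstar :: "real \<Rightarrow> real \<Rightarrow> real \<Rightarrow> real \<Rightarrow> real \<Rightarrow> real \<Rightarrow> bool" where
  "is_Qstar l r \<alpha> \<beta> \<delta> q =
     (if \<delta> > 0 then
        q < 0 \<and> (\<forall>Q>q. sgn (deriv (Aroot l r \<alpha> \<beta> \<delta>) Q) = sgn (l - r))
              \<and> (\<forall>Q<q. sgn (deriv (Aroot l r \<alpha> \<beta> \<delta>) Q) = - sgn (l - r))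
      else
        q > 0 \<and> (\<forall>Q<q. sgn (deriv (Aroot l r \<alpha> \<beta> \<delta>) Q) = - sgn (l - r))
              \<and> (\<forall>Q>q. sgn (deriv (Aroot l r \<alpha> \<beta> \<delta>) Q) = sgn (l - r)))"

end

theory Submission
  imports Defs "HOL-Real_Asymp.Real_Asymp"
begin


definition SS :: "real \<Rightarrow> real \<Rightarrow> real" where "SS Q x = sqrt (Q\<^sup>2 + x\<^sup>2)"
definition FF :: "real \<Rightarrow> real \<Rightarrow> real \<Rightarrow> real" where
  "FF d Q x = d * Q * ln (SS Q x + d * Q) - SS Q x"
definition PS :: "real \<Rightarrow> real \<Rightarrow> real \<Rightarrow> real" where
  "PS d Q x = d * ln (SS Q x + d * Q) - (1 - d\<^sup>2) * Q / (SS Q x + d * Q)"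
definition PSx :: "real \<Rightarrow> real \<Rightarrow> real \<Rightarrow> real" where
  "PSx d Q x = x * (d * SS Q x + Q) / (SS Q x * (SS Q x + d * Q)\<^sup>2)"
definition PSQ :: "real \<Rightarrow> real \<Rightarrow> real \<Rightarrow> real" where
  "PSQ d Q x = d * (Q / SS Q x + d) / (SS Q x + d * Q)
     - (1 - d\<^sup>2) * ((SS Q x + d * Q) - Q * (Q / SS Q x + d)) / (SS Q x + d * Q)\<^sup>2"

lemma SS_sq: "(SS Q x)\<^sup>2 = Q\<^sup>2 + x\<^sup>2"
  unfolding SS_def by simp

lemma SS_pos: "x \<noteq> 0 \<Longrightarrow> SS Q x > 0"
  unfolding SS_def by (simp add: add_nonneg_pos)

lemma SS_gt: "x \<noteq> 0 \<Longrightarrow> \<bar>Q\<bar> < SS Q x"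
  unfolding SS_def by (metis abs_of_nonneg abs_ge_zero add.right_neutral add_strict_left_mono real_sqrt_abs
      real_sqrt_less_mono zero_less_power2)

lemma u_pos: assumes "\<bar>d\<bar> < 1" "x \<noteq> 0" shows "SS Q x + d * Q > 0"
proof -
  have "\<bar>d * Q\<bar> \<le> \<bar>Q\<bar>" using assms(1) by (simp add: abs_mult mult_left_le_one_le)
  then show ?thesis using SS_gt[OF assms(2), of Q] by linarith
qed

lemma D_SS_x: assumes "x \<noteq> 0" shows "(SS Q has_real_derivative x / SS Q x) (at x)"
proof -
  have p: "0 < Q\<^sup>2 + x\<^sup>2" using assms by (simp add: add_nonneg_pos)
  have "((\<lambda>x. Q\<^sup>2 + x\<^sup>2) has_real_derivative 2 * x) (at x)"
    by (auto intro!: derivative_eq_intros)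
  from DERIV_chain2[OF DERIV_real_sqrt[OF p] this] show ?thesis
    unfolding SS_def by (simp add: field_simps)
qed

lemma D_SS_Q: assumes "x \<noteq> 0" shows "((\<lambda>Q. SS Q x) has_real_derivative Q / SS Q x) (at Q)"
proof -
  have p: "0 < Q\<^sup>2 + x\<^sup>2" using assms by (simp add: add_nonneg_pos)
  have "((\<lambda>Q. Q\<^sup>2 + x\<^sup>2) has_real_derivative 2 * Q) (at Q)"
    by (auto intro!: derivative_eq_intros)
  from DERIV_chain2[OF DERIV_real_sqrt[OF p] this] show ?thesis
    unfolding SS_def by (simp add: field_simps)
qed

lemma idFFx: assumes "(S::real)>0" "u>0" "u = S + d*Q" shows "d*Q*((x/S)/u) - x/S = -x/u"
  using assms(1,2) apply (simp add: field_simps) using assms(3) by algebra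

lemma idFFQ: assumes "(S::real)>0" "u>0" "u = S + d*Q"
  shows "d*Q*((Q/S + d)/u) - Q/S = - (1 - d\<^sup>2) * Q / u"
  using assms(1,2) apply (simp add: field_simps) using assms(3) by algebra

lemma idPSx: assumes "(S::real)>0" "u>0" "u = S + d*Q"
  shows "d*((x/S)/u) + (1 - d\<^sup>2) * Q * ((x/S)/u\<^sup>2) = x * (d * S + Q) / (S * u\<^sup>2)"
  using assms(1,2) apply (simp add: field_simps) using assms(3) by algebra

lemma ideuler: assumes "(S::real)>0" "u>0" "u = S + d*Q" "S\<^sup>2 = Q\<^sup>2 + x\<^sup>2"
  shows "x * (x * (d * S + Q) / (S * u\<^sup>2)) + Q * (d * (Q / S + d) / u
     - (1 - d\<^sup>2) * (u - Q * (Q / S + d)) / u\<^sup>2) = d"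
  using assms(1,2) apply (simp add: field_simps) using assms(3,4) by algebra


lemma gFFQ: assumes "(S::real)>0" "u>0" "u = S + d*Q"
  shows "d * 1 * L + ((Q / S + d) / u) * (d * Q) - Q / S = d * L - (1 - d\<^sup>2) * Q / u"
  using assms(1,2) apply (simp add: field_simps) using assms(3) by algebra

lemma gPSx: assumes "(S::real)>0" "u>0" "u = S + d*Q"
  shows "d * ((x / S) / u) - (- ((1 - d\<^sup>2) * Q) * (x / S) / u\<^sup>2) = x * (d * S + Q) / (S * u\<^sup>2)"
  using assms(1,2) apply (simp add: field_simps) using assms(3) by algebra

lemma gPSQ: assumes "(u::real)>0"
  shows "d * ((Q / S + d) / u) - ((1 - d\<^sup>2) * u - (1 - d\<^sup>2) * Q * (Q / S + d)) / u\<^sup>2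
    = d * (Q / S + d) / u - (1 - d\<^sup>2) * (u - Q * (Q / S + d)) / u\<^sup>2"
  by (simp add: algebra_simps)

lemma ginvx: assumes "(u::real)>0" shows "(0 * u - c * (x / S)) / (u * u) = - c * (x / S) / u\<^sup>2"
  by (simp add: power2_eq_square)

lemma ginvQ: assumes "(u::real)>0" shows "(c * 1 * u - c * Q * (Q / S + d)) / (u * u) = (c * u - c * Q * (Q / S + d)) / u\<^sup>2"
  by (simp add: power2_eq_square)

lemma D_u_x: assumes "x \<noteq> 0" shows "((\<lambda>x. SS Q x + d * Q) has_real_derivative x / SS Q x) (at x)"
  using DERIV_add[OF D_SS_x[OF assms] DERIV_const] by simp

lemma D_u_Q: assumes "x \<noteq> 0" shows "((\<lambda>Q. SS Q x + d * Q) has_real_derivative Q / SS Q x + d) (at Q)"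
  by (rule DERIV_cong[OF DERIV_add[OF D_SS_Q[OF assms] DERIV_cmult[OF DERIV_ident]]]) simp

lemma D_ln_x: assumes "\<bar>d\<bar> < 1" "x \<noteq> 0"
  shows "((\<lambda>x. ln (SS Q x + d * Q)) has_real_derivative (x / SS Q x) / (SS Q x + d * Q)) (at x)"
  by (rule DERIV_cong[OF DERIV_chain2[OF DERIV_ln_divide[OF u_pos[OF assms]] D_u_x[OF assms(2)]]]) simp

lemma D_ln_Q: assumes "\<bar>d\<bar> < 1" "x \<noteq> 0"
  shows "((\<lambda>Q. ln (SS Q x + d * Q)) has_real_derivative (Q / SS Q x + d) / (SS Q x + d * Q)) (at Q)"
  by (rule DERIV_cong[OF DERIV_chain2[OF DERIV_ln_divide[OF u_pos[OF assms]] D_u_Q[OF assms(2)]]]) simp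

lemma D_inv_x: assumes "\<bar>d\<bar> < 1" "x \<noteq> 0"
  shows "((\<lambda>x. c / (SS Q x + d * Q)) has_real_derivative - c * (x / SS Q x) / (SS Q x + d * Q)\<^sup>2) (at x)"
proof -
  have u: "SS Q x + d * Q > 0" using u_pos assms by auto
  then have u': "SS Q x + d * Q \<noteq> 0" by simp
  show ?thesis using DERIV_cong[OF DERIV_divide[OF DERIV_const D_u_x[OF assms(2)] u'] ginvx[OF u]] .
qed

lemma D_inv_Q: assumes "\<bar>d\<bar> < 1" "x \<noteq> 0"
  shows "((\<lambda>Q. c * Q / (SS Q x + d * Q)) has_real_derivative
     (c * (SS Q x + d * Q) - c * Q * (Q / SS Q x + d)) / (SS Q x + d * Q)\<^sup>2) (at Q)"
proof -
  have u: "SS Q x + d * Q > 0" using u_pos assms by auto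
  then have u': "SS Q x + d * Q \<noteq> 0" by simp
  show ?thesis using DERIV_cong[OF DERIV_divide[OF DERIV_cmult[OF DERIV_ident] D_u_Q[OF assms(2)] u'] ginvQ[OF u]] .
qed

lemma D_FF_x: assumes "\<bar>d\<bar> < 1" "x \<noteq> 0"
  shows "(FF d Q has_real_derivative - x / (SS Q x + d * Q)) (at x)"
proof -
  have S: "SS Q x > 0" using SS_pos assms by auto
  have u: "SS Q x + d * Q > 0" using u_pos assms by auto
  have "(FF d Q has_real_derivative (d * Q * ((x / SS Q x) / (SS Q x + d * Q)) - x / SS Q x)) (at x)"
    unfolding FF_def by (intro DERIV_diff DERIV_cmult D_ln_x D_SS_x assms)
  then show ?thesis using idFFx[OF S u refl] by simp
qed

lemma D_FF_Q: assumes "\<bar>d\<bar> < 1" "x \<noteq> 0"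
  shows "((\<lambda>Q. FF d Q x) has_real_derivative PS d Q x) (at Q)"
proof -
  have S: "SS Q x > 0" using SS_pos assms by auto
  have u: "SS Q x + d * Q > 0" using u_pos assms by auto
  have "((\<lambda>Q. FF d Q x) has_real_derivative
     (d * 1 * ln (SS Q x + d * Q) + ((Q / SS Q x + d) / (SS Q x + d * Q)) * (d * Q) - Q / SS Q x)) (at Q)"
    unfolding FF_def
    by (intro DERIV_diff DERIV_mult DERIV_cmult DERIV_ident D_ln_Q D_SS_Q assms)
  from DERIV_cong[OF this gFFQ[OF S u refl]] show ?thesis unfolding PS_def .
qed

lemma D_PS_x: assumes "\<bar>d\<bar> < 1" "x \<noteq> 0"
  shows "(PS d Q has_real_derivative PSx d Q x) (at x)"
proof -
  have S: "SS Q x > 0" using SS_pos assms by auto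
  have u: "SS Q x + d * Q > 0" using u_pos assms by auto
  have "(PS d Q has_real_derivative
     (d * ((x / SS Q x) / (SS Q x + d * Q)) - (- ((1 - d\<^sup>2) * Q) * (x / SS Q x) / (SS Q x + d * Q)\<^sup>2))) (at x)"
    unfolding PS_def by (intro DERIV_diff DERIV_cmult D_ln_x D_inv_x assms)
  from DERIV_cong[OF this gPSx[OF S u refl]] show ?thesis unfolding PSx_def .
qed

lemma D_PS_Q: assumes "\<bar>d\<bar> < 1" "x \<noteq> 0"
  shows "((\<lambda>Q. PS d Q x) has_real_derivative PSQ d Q x) (at Q)"
proof -
  have u: "SS Q x + d * Q > 0" using u_pos assms by auto
  have "((\<lambda>Q. PS d Q x) has_real_derivative
     (d * ((Q / SS Q x + d) / (SS Q x + d * Q)) - ((1 - d\<^sup>2) * (SS Q x + d * Q) - (1 - d\<^sup>2) * Q * (Q / SS Q x + d)) / (SS Q x + d * Q)\<^sup>2)) (at Q)"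
    unfolding PS_def by (intro DERIV_diff DERIV_cmult D_ln_Q D_inv_Q assms)
  from DERIV_cong[OF this gPSQ[OF u]] show ?thesis unfolding PSQ_def .
qed

lemma euler: assumes "\<bar>d\<bar> < 1" "x \<noteq> 0"
  shows "x * PSx d Q x + Q * PSQ d Q x = d"
proof -
  have S: "SS Q x > 0" using SS_pos assms by auto
  have u: "SS Q x + d * Q > 0" using u_pos assms by auto
  show ?thesis unfolding PSx_def PSQ_def using ideuler[OF S u refl SS_sq] .
qed



lemma mvt_open:
  fixes g g' :: "real \<Rightarrow> real"
  assumes "a \<noteq> b" and der: "\<And>x. min a b \<le> x \<Longrightarrow> x \<le> max a b \<Longrightarrow> (g has_real_derivative g' x) (at x)"
  shows "\<exists>\<xi>. min a b < \<xi> \<and> \<xi> < max a b \<and> g b - g a = g' \<xi> * (b - a)"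
proof (cases "a < b")
  case True
  then obtain z where "a < z" "z < b" "g b - g a = (b - a) * g' z"
    using MVT2[of a b g g'] der by auto
  then show ?thesis using True by (intro exI[of _ z]) (auto simp: algebra_simps)
next
  case False
  then have ba: "b < a" using assms(1) by auto
  then obtain z where "b < z" "z < a" "g a - g b = (a - b) * g' z"
    using MVT2[of b a g g'] der by auto
  then show ?thesis using ba by (intro exI[of _ z]) (auto simp: algebra_simps)
qed

lemma mvt_closed:
  fixes g g' :: "real \<Rightarrow> real"
  assumes der: "\<And>x. min a b \<le> x \<Longrightarrow> x \<le> max a b \<Longrightarrow> (g has_real_derivative g' x) (at x)"
  shows "\<exists>\<xi>. min a b \<le> \<xi> \<and> \<xi> \<le> max a b \<and> g b - g a = g' \<xi> * (b - a)"
proof (cases "a = b")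
  case True
  then show ?thesis by (intro exI[of _ a]) auto
next
  case False
  from mvt_open[OF False der] show ?thesis by (meson less_imp_le)
qed

lemma choose_xi:
  fixes f :: "real \<Rightarrow> real" and \<Phi> DD :: "real \<Rightarrow> real \<Rightarrow> real"
  assumes fc: "isCont f Q"
    and mvt: "\<And>y. \<exists>\<xi>. min (f Q) (f y) \<le> \<xi> \<and> \<xi> \<le> max (f Q) (f y) \<and>
               \<Phi> y (f y) - \<Phi> y (f Q) = DD y \<xi> * (f y - f Q)"
  shows "\<exists>\<xi>. (\<forall>y. \<Phi> y (f y) - \<Phi> y (f Q) = DD y (\<xi> y) * (f y - f Q)) \<and> (\<xi> \<longlongrightarrow> f Q) (at Q)"
proof -
  from mvt have "\<forall>y. \<exists>\<xi>. min (f Q) (f y) \<le> \<xi> \<and> \<xi> \<le> max (f Q) (f y) \<and>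
               \<Phi> y (f y) - \<Phi> y (f Q) = DD y \<xi> * (f y - f Q)" by blast
  then obtain \<xi> where \<xi>: "\<And>y. min (f Q) (f y) \<le> \<xi> y \<and> \<xi> y \<le> max (f Q) (f y) \<and>
               \<Phi> y (f y) - \<Phi> y (f Q) = DD y (\<xi> y) * (f y - f Q)" by metis
  have fl: "(f \<longlongrightarrow> f Q) (at Q)" using fc isCont_def by blast
  have "((\<lambda>y. \<xi> y - f Q) \<longlongrightarrow> 0) (at Q)"
  proof (rule Lim_null_comparison[where g="\<lambda>y. \<bar>f y - f Q\<bar>"])
    show "\<forall>\<^sub>F x in at Q. norm (\<xi> x - f Q) \<le> \<bar>f x - f Q\<bar>"
    proof (intro always_eventually allI)
      fix y
      have "min (f Q) (f y) \<le> \<xi> y" "\<xi> y \<le> max (f Q) (f y)" using \<xi>[of y] by auto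
      then show "norm (\<xi> y - f Q) \<le> \<bar>f y - f Q\<bar>"
        unfolding min_def max_def real_norm_def abs_real_def by (smt (verit))
    qed
    show "((\<lambda>y. \<bar>f y - f Q\<bar>) \<longlongrightarrow> 0) (at Q)"
      by (intro tendsto_rabs_zero) (simp add: LIM_zero_iff fl)
  qed
  then have "(\<xi> \<longlongrightarrow> f Q) (at Q)" by (simp add: LIM_zero_iff)
  then show ?thesis using \<xi> by blast
qed

lemma implicit_deriv:
  fixes f :: "real \<Rightarrow> real" and \<Phi> DD :: "real \<Rightarrow> real \<Rightarrow> real"
  assumes fc: "isCont f Q"
    and DQ: "((\<lambda>y. \<Phi> y (f Q)) has_real_derivative DQ) (at Q)"
    and zero: "\<And>y. \<Phi> y (f y) = 0"
    and mvt: "\<And>y. \<exists>\<xi>. min (f Q) (f y) \<le> \<xi> \<and> \<xi> \<le> max (f Q) (f y) \<and>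
               \<Phi> y (f y) - \<Phi> y (f Q) = DD y \<xi> * (f y - f Q)"
    and cont: "\<And>g. (g \<longlongrightarrow> f Q) (at Q) \<Longrightarrow> ((\<lambda>y. DD y (g y)) \<longlongrightarrow> DD Q (f Q)) (at Q)"
    and nz: "DD Q (f Q) \<noteq> 0"
  shows "(f has_real_derivative - DQ / DD Q (f Q)) (at Q)"
proof -
  obtain \<xi> where \<xi>: "\<And>y. \<Phi> y (f y) - \<Phi> y (f Q) = DD y (\<xi> y) * (f y - f Q)"
    and xl: "(\<xi> \<longlongrightarrow> f Q) (at Q)"
    using choose_xi[OF fc mvt] by blast
  have c2: "((\<lambda>y. DD y (\<xi> y)) \<longlongrightarrow> DD Q (f Q)) (at Q)" using cont xl .
  have ev: "eventually (\<lambda>y. DD y (\<xi> y) \<noteq> 0) (at Q)"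
    using tendsto_imp_eventually_ne[OF c2 nz] .
  have ev2: "eventually (\<lambda>y. y \<noteq> Q) (at Q)" by (simp add: eventually_at_filter)
  have q1: "((\<lambda>y. (\<Phi> y (f Q) - \<Phi> Q (f Q)) / (y - Q)) \<longlongrightarrow> DQ) (at Q)"
    using DQ by (simp add: has_field_derivative_iff)
  have lim: "((\<lambda>y. - ((\<Phi> y (f Q) - \<Phi> Q (f Q)) / (y - Q)) / DD y (\<xi> y)) \<longlongrightarrow> - DQ / DD Q (f Q)) (at Q)"
    by (intro tendsto_intros q1 c2 nz)
  show ?thesis unfolding has_field_derivative_iff
  proof (rule Lim_transform_eventually[OF lim])
    show "\<forall>\<^sub>F x in at Q. - ((\<Phi> x (f Q) - \<Phi> Q (f Q)) / (x - Q)) / DD x (\<xi> x) = (f x - f Q) / (x - Q)"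
      using ev ev2
    proof eventually_elim
      case (elim y)
      have e: "DD y (\<xi> y) * (f y - f Q) = - \<Phi> y (f Q)" using \<xi>[of y] zero[of y] by simp
      have z0: "\<Phi> Q (f Q) = 0" using zero by simp
      have a: "f y - f Q = - \<Phi> y (f Q) / DD y (\<xi> y)" using e elim by (simp add: field_simps)
      show ?case unfolding a z0 by simp
    qed
  qed
qed

lemma chain_deriv:
  fixes f :: "real \<Rightarrow> real" and \<Phi> DD :: "real \<Rightarrow> real \<Rightarrow> real"
  assumes fd: "(f has_real_derivative f') (at Q)"
    and DQ: "((\<lambda>y. \<Phi> y (f Q)) has_real_derivative DQ) (at Q)"
    and mvt: "\<And>y. \<exists>\<xi>. min (f Q) (f y) \<le> \<xi> \<and> \<xi> \<le> max (f Q) (f y) \<and>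
               \<Phi> y (f y) - \<Phi> y (f Q) = DD y \<xi> * (f y - f Q)"
    and cont: "\<And>g. (g \<longlongrightarrow> f Q) (at Q) \<Longrightarrow> ((\<lambda>y. DD y (g y)) \<longlongrightarrow> DD Q (f Q)) (at Q)"
  shows "((\<lambda>y. \<Phi> y (f y)) has_real_derivative DQ + DD Q (f Q) * f') (at Q)"
proof -
  have fc: "isCont f Q" using fd by (rule DERIV_isCont)
  obtain \<xi> where \<xi>: "\<And>y. \<Phi> y (f y) - \<Phi> y (f Q) = DD y (\<xi> y) * (f y - f Q)"
    and xl: "(\<xi> \<longlongrightarrow> f Q) (at Q)"
    using choose_xi[OF fc mvt] by blast
  have c2: "((\<lambda>y. DD y (\<xi> y)) \<longlongrightarrow> DD Q (f Q)) (at Q)" using cont xl .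
  have ev2: "eventually (\<lambda>y. y \<noteq> Q) (at Q)" by (simp add: eventually_at_filter)
  have q1: "((\<lambda>y. (\<Phi> y (f Q) - \<Phi> Q (f Q)) / (y - Q)) \<longlongrightarrow> DQ) (at Q)"
    using DQ by (simp add: has_field_derivative_iff)
  have q2: "((\<lambda>y. (f y - f Q) / (y - Q)) \<longlongrightarrow> f') (at Q)"
    using fd by (simp add: has_field_derivative_iff)
  have lim: "((\<lambda>y. (\<Phi> y (f Q) - \<Phi> Q (f Q)) / (y - Q) + DD y (\<xi> y) * ((f y - f Q) / (y - Q)))
     \<longlongrightarrow> DQ + DD Q (f Q) * f') (at Q)"
    by (intro tendsto_intros q1 c2 q2)
  show ?thesis unfolding has_field_derivative_iff
  proof (rule Lim_transform_eventually[OF lim])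
    show "\<forall>\<^sub>F x in at Q. (\<Phi> x (f Q) - \<Phi> Q (f Q)) / (x - Q) + DD x (\<xi> x) * ((f x - f Q) / (x - Q))
        = (\<Phi> x (f x) - \<Phi> Q (f Q)) / (x - Q)"
      using ev2
    proof eventually_elim
      case (elim y)
      have e: "\<Phi> y (f y) = \<Phi> y (f Q) + DD y (\<xi> y) * (f y - f Q)" using \<xi>[of y] by simp
      have "(\<Phi> y (f y) - \<Phi> Q (f Q)) / (y - Q) = ((\<Phi> y (f Q) - \<Phi> Q (f Q)) + DD y (\<xi> y) * (f y - f Q)) / (y - Q)"
        using e by simp
      also have "\<dots> = (\<Phi> y (f Q) - \<Phi> Q (f Q)) / (y - Q) + DD y (\<xi> y) * (f y - f Q) / (y - Q)"
        by (rule add_divide_distrib)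
      finally show ?case by simp
    qed
  qed
qed

lemma sign_right:
  fixes h :: "real \<Rightarrow> real"
  assumes cont: "\<And>x. isCont h x"
    and zd: "\<And>z. h z = 0 \<Longrightarrow> \<exists>D. (h has_real_derivative D) (at z) \<and> D * s > 0"
    and hq: "h q = 0" and Qq: "Q > q"
  shows "h Q * s > 0"
proof (rule ccontr)
  assume nQQ: "\<not> h Q * s > 0"
  define g where "g x = h x * s" for x
  have gc: "\<And>x. isCont g x" unfolding g_def by (intro continuous_intros cont)
  have gd: "\<And>z. g z = 0 \<Longrightarrow> \<exists>D. (g has_real_derivative D) (at z) \<and> D > 0"
  proof -
    fix z assume "g z = 0"
    then have "h z = 0 \<or> s = 0" unfolding g_def by simp
    moreover have "s \<noteq> 0" using zd[OF hq] by auto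
    ultimately have "h z = 0" by simp
    then obtain D where "(h has_real_derivative D) (at z)" "D * s > 0" using zd by blast
    then show "\<exists>D. (g has_real_derivative D) (at z) \<and> D > 0"
      unfolding g_def by (intro exI[of _ "D * s"]) (auto intro: DERIV_cmult_right)
  qed
  have gq: "g q = 0" using hq g_def by simp
  have gQ: "g Q \<le> 0" using nQQ g_def by simp
  obtain D where D: "(g has_real_derivative D) (at q)" "D > 0" using gd[OF gq] by blast
  obtain e where e: "e > 0" "\<And>t. t > 0 \<Longrightarrow> t < e \<Longrightarrow> g q < g (q + t)"
    using DERIV_pos_inc_right[OF D] by blast
  define a where "a = q + min e (Q - q) / 2"
  have "min e (Q - q) \<le> Q - q" "min e (Q - q) > 0" using e(1) Qq by auto
  then have aq: "q < a" "a < Q" unfolding a_def by (simp_all add: field_simps)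
  have ga: "g a > 0" using e(2)[of "min e (Q - q) / 2"] e(1) Qq gq unfolding a_def by auto
  define T where "T = {a..Q} \<inter> {x. g x \<le> 0}"
  have "Q \<in> T" using gQ aq unfolding T_def by auto
  then have Tne: "T \<noteq> {}" by blast
  have Tbd: "bdd_below T" unfolding T_def by (rule bdd_belowI[of _ a]) auto
  have gcon: "continuous_on UNIV g" using gc by (simp add: continuous_at_imp_continuous_on)
  have Tcl: "closed T" unfolding T_def
    by (intro closed_Int closed_atLeastAtMost closed_Collect_le gcon continuous_on_const)
  define z where "z = Inf T"
  have zT: "z \<in> T" unfolding z_def using closed_contains_Inf[OF Tne Tbd Tcl] .
  have zle: "\<And>t. t \<in> T \<Longrightarrow> z \<le> t" unfolding z_def using Tbd by (simp add: cInf_lower)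
  have za: "a \<le> z" "z \<le> Q" "g z \<le> 0" using zT unfolding T_def by auto
  have az: "a < z" using za ga by (metis order.order_iff_strict not_le)
  show False
  proof (cases "g z = 0")
    case True
    obtain D' where D': "(g has_real_derivative D') (at z)" "D' > 0" using gd[OF True] by blast
    obtain e' where e': "e' > 0" "\<And>t. t > 0 \<Longrightarrow> t < e' \<Longrightarrow> g (z - t) < g z"
      using DERIV_pos_inc_left[OF D'] by blast
    obtain m where m: "0 < m" "m \<le> e'" "m \<le> z - a" using e'(1) az by (intro that[of "min e' (z - a)"]) auto
    define t where "t = m / 2"
    have t: "t > 0" "t < e'" "z - t > a" using m unfolding t_def by auto
    have "g (z - t) < 0" using e'(2)[OF t(1,2)] True by simp
    then have "z - t \<in> T" using t za unfolding T_def by auto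
    then show False using zle t(1) by fastforce
  next
    case False
    then have gz: "g z < 0" using za by simp
    obtain t where t: "a \<le> t" "t \<le> z" "g t = 0"
      using IVT2[of g z 0 a] gz ga az gc by fastforce
    then have "t \<in> T" using za unfolding T_def by auto
    moreover have "t \<noteq> z" using t gz by auto
    ultimately show False using zle t by fastforce
  qed
qed

lemma sign_left:
  fixes h :: "real \<Rightarrow> real"
  assumes cont: "\<And>x. isCont h x"
    and zd: "\<And>z. h z = 0 \<Longrightarrow> \<exists>D. (h has_real_derivative D) (at z) \<and> D * s > 0"
    and hq: "h q = 0" and Qq: "Q < q"
  shows "h Q * s < 0"
proof (rule ccontr)
  assume nQQ: "\<not> h Q * s < 0"
  show False
  proof (cases "h Q = 0")
    case True
    from sign_right[OF cont zd True Qq] hq show False by simp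
  next
    case False
    define g where "g x = h x * s" for x
    have gc: "\<And>x. isCont g x" unfolding g_def by (intro continuous_intros cont)
    have sn: "s \<noteq> 0" using zd[OF hq] by auto
    have gQ: "g Q > 0" using nQQ False sn unfolding g_def
      by (metis linorder_neqE_linordered_idom mult_eq_0_iff)
    obtain D where D: "(h has_real_derivative D) (at q)" "D * s > 0" using zd[OF hq] by blast
    have Dg: "(g has_real_derivative D * s) (at q)" unfolding g_def using D(1) by (rule DERIV_cmult_right)
    obtain e where e: "e > 0" "\<And>t. t > 0 \<Longrightarrow> t < e \<Longrightarrow> g (q - t) < g q"
      using DERIV_pos_inc_left[OF Dg D(2)] by blast
    define p where "p = q - min e (q - Q) / 2"
    have "min e (q - Q) \<le> q - Q" "min e (q - Q) > 0" using e(1) Qq by auto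
    then have pq: "Q < p" "p < q" unfolding p_def by (simp_all add: field_simps)
    have gp: "g p < 0" using e(2)[of "min e (q - Q) / 2"] e(1) Qq hq unfolding p_def g_def by auto
    obtain t where t: "Q \<le> t" "t \<le> p" "g t = 0"
      using IVT2[of g p 0 Q] gp gQ pq gc by fastforce
    have "h t = 0" using t(3) zd[OF hq] unfolding g_def by auto
    from sign_right[OF cont zd this, of q] t pq hq show False by simp
  qed
qed



definition BB :: "real \<Rightarrow> real \<Rightarrow> real \<Rightarrow> real \<Rightarrow> real" where "BB k l r A = k * (l - A) + r"
definition GF :: "real \<Rightarrow> real \<Rightarrow> real \<Rightarrow> real \<Rightarrow> real \<Rightarrow> real \<Rightarrow> real" where
  "GF d k l r Q A = FF d Q A - FF d Q (BB k l r A) - A + l"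
definition GA :: "real \<Rightarrow> real \<Rightarrow> real \<Rightarrow> real \<Rightarrow> real \<Rightarrow> real \<Rightarrow> real" where
  "GA d k l r Q A = - A / (SS Q A + d * Q) - k * BB k l r A / (SS Q (BB k l r A) + d * Q) - 1"
definition GQ :: "real \<Rightarrow> real \<Rightarrow> real \<Rightarrow> real \<Rightarrow> real \<Rightarrow> real \<Rightarrow> real" where
  "GQ d k l r Q A = PS d Q A - PS d Q (BB k l r A)"
definition GQQ :: "real \<Rightarrow> real \<Rightarrow> real \<Rightarrow> real \<Rightarrow> real \<Rightarrow> real \<Rightarrow> real" where
  "GQQ d k l r Q A = PSQ d Q A - PSQ d Q (BB k l r A)"
definition GQA :: "real \<Rightarrow> real \<Rightarrow> real \<Rightarrow> real \<Rightarrow> real \<Rightarrow> real \<Rightarrow> real" where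
  "GQA d k l r Q A = PSx d Q A + k * PSx d Q (BB k l r A)"

lemma D_BB: "((\<lambda>A. BB k l r A) has_real_derivative - k) (at A)"
  unfolding BB_def by (rule DERIV_cong) (auto intro!: derivative_eq_intros)

lemma tend_SS: "(g \<longlongrightarrow> a) F \<Longrightarrow> (u \<longlongrightarrow> Q) F \<Longrightarrow> ((\<lambda>y. SS (u y) (g y)) \<longlongrightarrow> SS Q a) F"
  unfolding SS_def by (intro tendsto_intros)

lemma tend_PS: assumes "\<bar>d\<bar> < 1" "a \<noteq> 0" "(g \<longlongrightarrow> a) F" "(u \<longlongrightarrow> Q) F"
  shows "((\<lambda>y. PS d (u y) (g y)) \<longlongrightarrow> PS d Q a) F"
proof -
  have p: "SS Q a + d * Q \<noteq> 0" using u_pos[OF assms(1,2), of Q] by linarith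
  show ?thesis unfolding PS_def
    by (intro tendsto_intros tend_SS assms p)
qed

lemma tend_PSx: assumes "\<bar>d\<bar> < 1" "a \<noteq> 0" "(g \<longlongrightarrow> a) F" "(u \<longlongrightarrow> Q) F"
  shows "((\<lambda>y. PSx d (u y) (g y)) \<longlongrightarrow> PSx d Q a) F"
proof -
  have p1: "SS Q a + d * Q \<noteq> 0" using u_pos[OF assms(1,2), of Q] by linarith
  have p2: "SS Q a \<noteq> 0" using SS_pos[OF assms(2), of Q] by linarith
  have p: "SS Q a * (SS Q a + d * Q)\<^sup>2 \<noteq> 0" using p1 p2 by simp
  show ?thesis unfolding PSx_def
    by (intro tendsto_intros tend_SS assms p)
qed

lemma tend_BB: "(g \<longlongrightarrow> a) F \<Longrightarrow> ((\<lambda>y. BB k l r (g y)) \<longlongrightarrow> BB k l r a) F"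
  unfolding BB_def by (intro tendsto_intros)

lemma tend_div: assumes "\<bar>d\<bar> < 1" "a \<noteq> 0" "(g \<longlongrightarrow> a) F" "(u \<longlongrightarrow> Q) F"
  shows "((\<lambda>y. g y / (SS (u y) (g y) + d * u y)) \<longlongrightarrow> a / (SS Q a + d * Q)) F"
proof -
  have p: "SS Q a + d * Q \<noteq> 0" using u_pos[OF assms(1,2), of Q] by linarith
  show ?thesis by (intro tendsto_intros tend_SS assms p)
qed

lemma PSx_fac: assumes "\<bar>d\<bar> < 1" "x > 0" shows "\<exists>p>0. PSx d Q x = p * (d * SS Q x + Q)"
proof -
  have S: "SS Q x > 0" using SS_pos assms by auto
  have u: "SS Q x + d * Q > 0" using u_pos assms by auto
  show ?thesis using S u assms(2) unfolding PSx_def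
    by (intro exI[of _ "x / (SS Q x * (SS Q x + d * Q)\<^sup>2)"]) auto
qed

lemma SS_mono: assumes "0 \<le> a" "a < b" shows "SS Q a < SS Q b"
proof -
  have "a\<^sup>2 < b\<^sup>2" using assms by (intro power_strict_mono) auto
  then show ?thesis unfolding SS_def by simp
qed

lemma FF_bound: assumes "\<bar>d\<bar> < 1" "Q \<noteq> 0" "a > 0" "b > 0"
  shows "\<bar>FF d Q a - FF d Q b\<bar> \<le> \<bar>a - b\<bar> * max a b / ((1 - \<bar>d\<bar>) * \<bar>Q\<bar>)"
proof -
  obtain \<xi> where \<xi>: "min b a \<le> \<xi>" "\<xi> \<le> max b a" "FF d Q a - FF d Q b = - \<xi> / (SS Q \<xi> + d * Q) * (a - b)"
  proof -
    have "\<exists>\<xi>. min b a \<le> \<xi> \<and> \<xi> \<le> max b a \<and> FF d Q a - FF d Q b = - \<xi> / (SS Q \<xi> + d * Q) * (a - b)"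
    proof (rule mvt_closed)
      fix x assume "min b a \<le> x" "x \<le> max b a"
      then have "x \<noteq> 0" using assms by (auto simp: min_def split: if_splits)
      then show "(FF d Q has_real_derivative - x / (SS Q x + d * Q)) (at x)" by (rule D_FF_x[OF assms(1)])
    qed
    then show ?thesis using that by blast
  qed
  have xp: "\<xi> > 0" using \<xi>(1) assms by (auto simp: min_def split: if_splits)
  have xm: "\<xi> \<le> max a b" using \<xi>(2) by (simp add: max.commute)
  have Sg: "\<bar>Q\<bar> < SS Q \<xi>" using SS_gt xp by simp
  have "- (\<bar>d\<bar> * \<bar>Q\<bar>) \<le> d * Q" by (simp add: abs_mult[symmetric] abs_le_iff)
  then have den: "(1 - \<bar>d\<bar>) * \<bar>Q\<bar> \<le> SS Q \<xi> + d * Q" using Sg by (simp add: algebra_simps)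
  have dp: "(1 - \<bar>d\<bar>) * \<bar>Q\<bar> > 0" using assms(1,2) by simp
  define t where "t = \<xi> / (SS Q \<xi> + d * Q)"
  have "\<xi> / (SS Q \<xi> + d * Q) \<le> max a b / ((1 - \<bar>d\<bar>) * \<bar>Q\<bar>)"
    by (rule frac_le) (use xm den dp xp in auto)
  moreover have "\<xi> / (SS Q \<xi> + d * Q) \<ge> 0" using xp den dp by simp
  ultimately have tt: "t \<le> max a b / ((1 - \<bar>d\<bar>) * \<bar>Q\<bar>)" "t \<ge> 0" unfolding t_def by auto
  have e: "- \<xi> / (SS Q \<xi> + d * Q) * (a - b) = - (t * (a - b))" unfolding t_def by simp
  have "\<bar>FF d Q a - FF d Q b\<bar> = t * \<bar>a - b\<bar>" unfolding \<xi>(3) e using tt(2) by (simp add: abs_mult)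
  also have "\<dots> \<le> max a b / ((1 - \<bar>d\<bar>) * \<bar>Q\<bar>) * \<bar>a - b\<bar>" by (rule mult_right_mono[OF tt(1)]) simp
  also have "\<dots> = \<bar>a - b\<bar> * max a b / ((1 - \<bar>d\<bar>) * \<bar>Q\<bar>)" by simp
  finally show ?thesis .
qed

lemma lim_inv_abs: "((\<lambda>x::real. C / \<bar>x\<bar>) \<longlongrightarrow> 0) at_top" "((\<lambda>x::real. C / \<bar>x\<bar>) \<longlongrightarrow> 0) at_bot"
  by real_asymp+

context
  fixes l r k d :: real
  assumes lpos: "l > 0" and rpos: "r > 0" and kpos: "k > 0" and dlt: "\<bar>d\<bar> < 1"
begin

lemma B_pos: assumes "A < l + r / k" shows "BB k l r A > 0"
proof -
  have "k * (l + r / k - A) > 0" using assms kpos by simp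
  moreover have "k * (l + r / k - A) = BB k l r A" unfolding BB_def using kpos by (simp add: field_simps)
  ultimately show ?thesis by simp
qed

lemma D_GF_A: assumes "0 < A" "A < l + r / k"
  shows "(GF d k l r Q has_real_derivative GA d k l r Q A) (at A)"
proof -
  have B: "BB k l r A \<noteq> 0" using B_pos[OF assms(2)] by simp
  have A: "A \<noteq> 0" using assms by simp
  have "((\<lambda>A. FF d Q A - FF d Q (BB k l r A) - A + l) has_real_derivative
      (- A / (SS Q A + d * Q) - (- BB k l r A / (SS Q (BB k l r A) + d * Q) * - k) - 1 + 0)) (at A)"
    by (intro DERIV_add DERIV_diff D_FF_x[OF dlt A] DERIV_chain2[OF D_FF_x[OF dlt B] D_BB] DERIV_ident DERIV_const)
  then show ?thesis unfolding GF_def GA_def by (simp add: algebra_simps)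
qed

lemma D_GF_Q: assumes "0 < A" "A < l + r / k"
  shows "((\<lambda>Q. GF d k l r Q A) has_real_derivative GQ d k l r Q A) (at Q)"
proof -
  have B: "BB k l r A \<noteq> 0" using B_pos[OF assms(2)] by simp
  have A: "A \<noteq> 0" using assms by simp
  have "((\<lambda>Q. FF d Q A - FF d Q (BB k l r A) - A + l) has_real_derivative
      (PS d Q A - PS d Q (BB k l r A) - 0 + 0)) (at Q)"
    by (intro DERIV_add DERIV_diff D_FF_Q[OF dlt A] D_FF_Q[OF dlt B] DERIV_const)
  then show ?thesis unfolding GF_def GQ_def by simp
qed

lemma D_GQ_Q: assumes "0 < A" "A < l + r / k"
  shows "((\<lambda>Q. GQ d k l r Q A) has_real_derivative GQQ d k l r Q A) (at Q)"
proof -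
  have B: "BB k l r A \<noteq> 0" using B_pos[OF assms(2)] by simp
  have A: "A \<noteq> 0" using assms by simp
  show ?thesis unfolding GQ_def GQQ_def
    by (intro DERIV_diff D_PS_Q[OF dlt A] D_PS_Q[OF dlt B])
qed

lemma D_GQ_A: assumes "0 < A" "A < l + r / k"
  shows "(GQ d k l r Q has_real_derivative GQA d k l r Q A) (at A)"
proof -
  have B: "BB k l r A \<noteq> 0" using B_pos[OF assms(2)] by simp
  have A: "A \<noteq> 0" using assms by simp
  have "((\<lambda>A. PS d Q A - PS d Q (BB k l r A)) has_real_derivative
      (PSx d Q A - PSx d Q (BB k l r A) * - k)) (at A)"
    by (intro DERIV_diff D_PS_x[OF dlt A] DERIV_chain2[OF D_PS_x[OF dlt B] D_BB])
  then show ?thesis unfolding GQ_def GQA_def by (simp add: algebra_simps)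
qed

lemma GA_le: assumes "0 < A" "A < l + r / k" shows "GA d k l r Q A \<le> -1"
proof -
  have B: "BB k l r A > 0" using B_pos[OF assms(2)] by simp
  have ua: "SS Q A + d * Q > 0" using u_pos[OF dlt] assms by simp
  have ub: "SS Q (BB k l r A) + d * Q > 0" using u_pos[OF dlt] B by simp
  have "A / (SS Q A + d * Q) \<ge> 0" using ua assms by simp
  moreover have "k * BB k l r A / (SS Q (BB k l r A) + d * Q) \<ge> 0" using ub B kpos by simp
  ultimately show ?thesis unfolding GA_def by simp
qed

lemma GF_slope: assumes "0 < a" "a \<le> b" "b < l + r / k"
  shows "GF d k l r Q b + b \<le> GF d k l r Q a + a"
proof (rule DERIV_nonpos_imp_nonincreasing[OF assms(2)])
  fix x assume "a \<le> x" "x \<le> b"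
  then have x: "0 < x" "x < l + r / k" using assms by auto
  show "\<exists>y. ((\<lambda>x. GF d k l r Q x + x) has_real_derivative y) (at x) \<and> y \<le> 0"
  proof -
    have "((\<lambda>x. GF d k l r Q x + x) has_real_derivative GA d k l r Q x + 1) (at x)"
      using DERIV_add[OF D_GF_A[OF x] DERIV_ident] .
    moreover have "GA d k l r Q x + 1 \<le> 0" using GA_le[OF x, of Q] by simp
    ultimately show ?thesis by blast
  qed
qed

lemma GF_strict: assumes "0 < a" "a < b" "b < l + r / k"
  shows "GF d k l r Q b < GF d k l r Q a"
  using GF_slope[of a b Q] assms by simp

lemma FF_mono: assumes "0 < a" "a \<le> b" shows "FF d Q b \<le> FF d Q a"
proof (rule DERIV_nonpos_imp_nonincreasing[OF assms(2)])
  fix x assume "a \<le> x" "x \<le> b"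
  then have x: "0 < x" using assms by auto
  have u: "SS Q x + d * Q > 0" using u_pos[OF dlt] x by simp
  show "\<exists>y. (FF d Q has_real_derivative y) (at x) \<and> y \<le> 0"
    using D_FF_x[OF dlt, of x Q] x u by (intro exI[of _ "- x / (SS Q x + d * Q)"]) auto
qed

definition "As = (k * l + r) / (1 + k)"

lemma As_facts: "BB k l r As = As" "0 < As" "As < l + r / k" "(As - l) * (1 + k) = r - l"
proof -
  show "BB k l r As = As" unfolding BB_def As_def using kpos by (simp add: field_simps)
  show "0 < As" unfolding As_def using kpos lpos rpos by (intro divide_pos_pos add_pos_pos mult_pos_pos) auto
  show "(As - l) * (1 + k) = r - l" unfolding As_def using kpos by (simp add: field_simps)
  have "As < l + r / k \<longleftrightarrow> (k * l + r) * k < (l * k + r) * (1 + k)"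
    unfolding As_def using kpos by (simp add: field_simps)
  also have "\<dots> \<longleftrightarrow> 0 < (l * k + r)" using kpos by (simp add: algebra_simps)
  moreover have "0 < l * k + r" using kpos lpos rpos by (intro add_pos_pos mult_pos_pos)
  ultimately show "As < l + r / k" by simp
qed

lemma As_cmp: "l < As \<longleftrightarrow> l < r" "As < l \<longleftrightarrow> r < l"
proof -
  have e: "As - l = (r - l) / (1 + k)" using As_facts(4) kpos by (simp add: field_simps)
  have p: "1 + k > 0" using kpos by simp
  have "l < As \<longleftrightarrow> 0 < As - l" by simp
  also have "\<dots> \<longleftrightarrow> 0 < r - l" unfolding e using p by (simp add: zero_less_divide_iff)
  finally show "l < As \<longleftrightarrow> l < r" by simp
  have "As < l \<longleftrightarrow> As - l < 0" by simp
  also have "\<dots> \<longleftrightarrow> r - l < 0" unfolding e using p by (simp add: divide_less_0_iff)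
  finally show "As < l \<longleftrightarrow> r < l" by simp
qed

lemma GF_As: "GF d k l r Q As = l - As"
  unfolding GF_def using As_facts(1) by simp

lemma GF_l: "GF d k l r Q l = FF d Q l - FF d Q r"
  unfolding GF_def BB_def by simp

lemma l_dom: "l < l + r / k" using rpos kpos by simp

lemma root_exists: "\<exists>A. min l As \<le> A \<and> A \<le> max l As \<and> GF d k l r Q A = 0"
proof -
  have cont: "isCont (GF d k l r Q) x" if "min l As \<le> x" "x \<le> max l As" for x
  proof -
    have "0 < x" "x < l + r / k" using that As_facts l_dom lpos by (auto simp: min_def max_def split: if_splits)
    then show ?thesis using D_GF_A DERIV_isCont by blast
  qed
  show ?thesis
  proof (cases "l \<le> As")
    case True
    then have "l \<le> r" using As_cmp(2) by linarith
    then have "GF d k l r Q l \<ge> 0" unfolding GF_l using FF_mono[OF lpos] by simp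
    moreover have "GF d k l r Q As \<le> 0" unfolding GF_As using True by simp
    ultimately obtain x where "l \<le> x" "x \<le> As" "GF d k l r Q x = 0"
      using IVT2[of "GF d k l r Q" As 0 l] True cont by auto
    then show ?thesis using True by (intro exI[of _ x]) auto
  next
    case False
    then have "r \<le> l" using As_cmp(1) by linarith
    then have "GF d k l r Q l \<le> 0" unfolding GF_l using FF_mono[OF rpos] by simp
    moreover have "GF d k l r Q As \<ge> 0" unfolding GF_As using False by simp
    ultimately obtain x where "As \<le> x" "x \<le> l" "GF d k l r Q x = 0"
      using IVT2[of "GF d k l r Q" l 0 As] False cont by auto
    then show ?thesis using False by (intro exI[of _ x]) auto
  qed
qed

lemma root_unique: assumes "0 < a" "a < l + r / k" "GF d k l r Q a = 0"
    "0 < b" "b < l + r / k" "GF d k l r Q b = 0" shows "a = b"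
  using GF_strict[of a b Q] GF_strict[of b a Q] assms by (cases a b rule: linorder_cases) auto

definition "Rt Q = (THE A. 0 < A \<and> A < l + r / k \<and> GF d k l r Q A = 0)"

lemma Rt_props: "0 < Rt Q" "Rt Q < l + r / k" "GF d k l r Q (Rt Q) = 0"
    "min l As \<le> Rt Q" "Rt Q \<le> max l As"
proof -
  obtain A where A: "min l As \<le> A" "A \<le> max l As" "GF d k l r Q A = 0" using root_exists by blast
  then have Ad: "0 < A" "A < l + r / k" using As_facts l_dom lpos by (auto simp: min_def max_def split: if_splits)
  have "Rt Q = A" unfolding Rt_def
    by (rule the_equality) (use A Ad root_unique in auto)
  then show "0 < Rt Q" "Rt Q < l + r / k" "GF d k l r Q (Rt Q) = 0"
    "min l As \<le> Rt Q" "Rt Q \<le> max l As" using A Ad by auto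
qed

lemma Rt_unique: assumes "0 < A" "A < l + r / k" "GF d k l r Q A = 0" shows "A = Rt Q"
  using root_unique[OF assms Rt_props(1-3)] .

lemma Rt_eq: "l = r \<Longrightarrow> Rt Q = l"
  using Rt_unique[OF lpos l_dom, of Q] GF_l by simp

lemma AB_sign: assumes "l \<noteq> r" shows "(Rt Q - BB k l r (Rt Q)) * (l - r) > 0"
proof -
  have e: "Rt Q - BB k l r (Rt Q) = (1 + k) * (Rt Q - As)"
    unfolding BB_def As_def using kpos by (simp add: field_simps)
  have ne: "Rt Q \<noteq> As" using Rt_props(3)[of Q] GF_As assms As_facts(4) by auto
  show ?thesis
  proof (cases "l < r")
    case True
    then have "l < As" using As_cmp(1) by simp
    then have "Rt Q < As" using Rt_props(5)[of Q] ne by simp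
    then have "(Rt Q - As) * (l - r) > 0" using True by (intro mult_neg_neg) auto
    then show ?thesis unfolding e using kpos by (simp add: mult.assoc)
  next
    case False
    then have "r < l" using assms by simp
    then have "As < l" using As_cmp(2) by simp
    then have "As < Rt Q" using Rt_props(4)[of Q] ne by simp
    then have "(Rt Q - As) * (l - r) > 0" using \<open>r < l\<close> by (intro mult_pos_pos) auto
    then show ?thesis unfolding e using kpos by (simp add: mult.assoc)
  qed
qed

lemma Rt_lip: "\<bar>Rt y - Rt Q\<bar> \<le> \<bar>GF d k l r y (Rt Q)\<bar>"
proof (cases "Rt Q \<le> Rt y")
  case True
  have "GF d k l r y (Rt y) + Rt y \<le> GF d k l r y (Rt Q) + Rt Q"
    using GF_slope[OF Rt_props(1) True Rt_props(2)] .
  then show ?thesis using True Rt_props(3)[of y] by simp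
next
  case False
  have "GF d k l r y (Rt Q) + Rt Q \<le> GF d k l r y (Rt y) + Rt y"
    using GF_slope[OF Rt_props(1)] False Rt_props(2)[of Q] by simp
  then show ?thesis using False Rt_props(3)[of y] by simp
qed

lemma Rt_cont: "isCont Rt Q"
proof -
  have c: "isCont (\<lambda>y. GF d k l r y (Rt Q)) Q"
    using D_GF_Q[OF Rt_props(1,2)] by (rule DERIV_isCont)
  then have "((\<lambda>y. GF d k l r y (Rt Q)) \<longlongrightarrow> 0) (at Q)"
    using Rt_props(3)[of Q] isCont_def by metis
  then have z: "((\<lambda>y. \<bar>GF d k l r y (Rt Q)\<bar>) \<longlongrightarrow> 0) (at Q)" by (rule tendsto_rabs_zero)
  have "((\<lambda>y. Rt y - Rt Q) \<longlongrightarrow> 0) (at Q)"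
    by (rule Lim_null_comparison[OF _ z]) (simp add: Rt_lip)
  then show ?thesis unfolding isCont_def by (simp add: LIM_zero_iff)
qed

lemma dom_between: assumes "min (Rt Q) (Rt y) \<le> x" "x \<le> max (Rt Q) (Rt y)"
  shows "0 < x" "x < l + r / k"
  using assms Rt_props(1,2)[of Q] Rt_props(1,2)[of y] by (auto simp: min_def max_def split: if_splits)

lemma tend_GA: assumes "(g \<longlongrightarrow> Rt Q) (at Q)"
  shows "((\<lambda>y. GA d k l r y (g y)) \<longlongrightarrow> GA d k l r Q (Rt Q)) (at Q)"
proof -
  have a: "Rt Q \<noteq> 0" using Rt_props(1)[of Q] by simp
  have b: "BB k l r (Rt Q) \<noteq> 0" using B_pos[OF Rt_props(2), of Q] by linarith
  have i: "((\<lambda>y. y) \<longlongrightarrow> Q) (at Q)" by (rule tendsto_ident_at)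
  have t1: "((\<lambda>y. SS y (g y)) \<longlongrightarrow> SS Q (Rt Q)) (at Q)" by (rule tend_SS[OF assms i])
  have t2: "((\<lambda>y. BB k l r (g y)) \<longlongrightarrow> BB k l r (Rt Q)) (at Q)" by (rule tend_BB[OF assms])
  have t3: "((\<lambda>y. SS y (BB k l r (g y))) \<longlongrightarrow> SS Q (BB k l r (Rt Q))) (at Q)" by (rule tend_SS[OF t2 i])
  have n1: "SS Q (Rt Q) + d * Q \<noteq> 0" using u_pos[OF dlt a, of Q] by linarith
  have n2: "SS Q (BB k l r (Rt Q)) + d * Q \<noteq> 0" using u_pos[OF dlt b, of Q] by linarith
  show ?thesis unfolding GA_def
    by (intro tendsto_intros assms t1 t2 t3 n1 n2)
qed

lemma tend_GQA: assumes "(g \<longlongrightarrow> Rt Q) (at Q)"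
  shows "((\<lambda>y. GQA d k l r y (g y)) \<longlongrightarrow> GQA d k l r Q (Rt Q)) (at Q)"
proof -
  have a: "Rt Q \<noteq> 0" using Rt_props(1)[of Q] by simp
  have b: "BB k l r (Rt Q) \<noteq> 0" using B_pos[OF Rt_props(2), of Q] by linarith
  have i: "((\<lambda>y. y) \<longlongrightarrow> Q) (at Q)" by (rule tendsto_ident_at)
  show ?thesis unfolding GQA_def
    by (intro tendsto_intros tend_PSx[OF dlt a assms i] tend_PSx[OF dlt b tend_BB[OF assms] i])
qed

definition "Rd Q = - GQ d k l r Q (Rt Q) / GA d k l r Q (Rt Q)"

lemma Rt_deriv: "(Rt has_real_derivative Rd Q) (at Q)"
  unfolding Rd_def
proof (rule implicit_deriv[where \<Phi>="GF d k l r" and DD="GA d k l r"])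
  show "isCont Rt Q" by (rule Rt_cont)
  show "((\<lambda>y. GF d k l r y (Rt Q)) has_real_derivative GQ d k l r Q (Rt Q)) (at Q)"
    by (rule D_GF_Q[OF Rt_props(1,2)])
  show "\<And>y. GF d k l r y (Rt y) = 0" by (rule Rt_props(3))
  show "\<exists>\<xi>. min (Rt Q) (Rt y) \<le> \<xi> \<and> \<xi> \<le> max (Rt Q) (Rt y) \<and>
    GF d k l r y (Rt y) - GF d k l r y (Rt Q) = GA d k l r y \<xi> * (Rt y - Rt Q)" for y
    by (rule mvt_closed) (intro D_GF_A dom_between; assumption)
  show "\<And>g. (g \<longlongrightarrow> Rt Q) (at Q) \<Longrightarrow> ((\<lambda>y. GA d k l r y (g y)) \<longlongrightarrow> GA d k l r Q (Rt Q)) (at Q)"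
    by (rule tend_GA)
  show "GA d k l r Q (Rt Q) \<noteq> 0" using GA_le[OF Rt_props(1)[of Q] Rt_props(2)[of Q], of Q] by linarith
qed

definition "hh Q = GQ d k l r Q (Rt Q)"

lemma hh_cont: "isCont hh Q"
proof -
  have a: "Rt Q \<noteq> 0" using Rt_props(1)[of Q] by simp
  have b: "BB k l r (Rt Q) \<noteq> 0" using B_pos[OF Rt_props(2), of Q] by linarith
  have i: "((\<lambda>y. y) \<longlongrightarrow> Q) (at Q)" by (rule tendsto_ident_at)
  have t: "(Rt \<longlongrightarrow> Rt Q) (at Q)" using Rt_cont isCont_def by blast
  show ?thesis unfolding isCont_def hh_def GQ_def
    by (intro tendsto_intros tend_PS[OF dlt a t i] tend_PS[OF dlt b tend_BB[OF t] i])
qed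

lemma hh_deriv_zero: assumes "hh Q = 0"
  shows "(hh has_real_derivative GQQ d k l r Q (Rt Q)) (at Q)"
proof -
  have "((\<lambda>y. GQ d k l r y (Rt y)) has_real_derivative GQQ d k l r Q (Rt Q) + GQA d k l r Q (Rt Q) * Rd Q) (at Q)"
  proof (rule chain_deriv[where DD="GQA d k l r"])
    show "(Rt has_real_derivative Rd Q) (at Q)" by (rule Rt_deriv)
    show "((\<lambda>y. GQ d k l r y (Rt Q)) has_real_derivative GQQ d k l r Q (Rt Q)) (at Q)"
      by (rule D_GQ_Q[OF Rt_props(1,2)])
    show "\<exists>\<xi>. min (Rt Q) (Rt y) \<le> \<xi> \<and> \<xi> \<le> max (Rt Q) (Rt y) \<and>
      GQ d k l r y (Rt y) - GQ d k l r y (Rt Q) = GQA d k l r y \<xi> * (Rt y - Rt Q)" for y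
      by (rule mvt_closed) (intro D_GQ_A dom_between; assumption)
    show "\<And>g. (g \<longlongrightarrow> Rt Q) (at Q) \<Longrightarrow> ((\<lambda>y. GQA d k l r y (g y)) \<longlongrightarrow> GQA d k l r Q (Rt Q)) (at Q)"
      by (rule tend_GQA)
  qed
  moreover have "Rd Q = 0" using assms unfolding Rd_def hh_def by simp
  ultimately show ?thesis unfolding hh_def by simp
qed

lemma AB_bounds: "Rt Q \<le> l + r" "BB k l r (Rt Q) \<le> l + r"
proof -
  have As_le: "As \<le> l + r" unfolding As_def using kpos lpos rpos by (simp add: field_simps)
  show "Rt Q \<le> l + r" using Rt_props(5)[of Q] As_le rpos by (auto simp: max_def split: if_splits)
  show "BB k l r (Rt Q) \<le> l + r"
  proof (cases "l \<le> Rt Q")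
    case True
    then have "k * (l - Rt Q) \<le> 0" using kpos by (simp add: mult_nonneg_nonpos)
    then show ?thesis unfolding BB_def using lpos by simp
  next
    case False
    then have "As \<le> Rt Q" using Rt_props(4)[of Q] by (auto simp: min_def split: if_splits)
    then have "k * (Rt Q - As) \<ge> 0" using kpos by simp
    moreover have "BB k l r (Rt Q) - As = - k * (Rt Q - As)"
      using As_facts(1) unfolding BB_def by (simp add: algebra_simps)
    ultimately have "BB k l r (Rt Q) \<le> As" by simp
    then show ?thesis using As_le by simp
  qed
qed

lemma hh_mvt: assumes "l \<noteq> r"
  shows "\<exists>\<xi>. min (Rt Q) (BB k l r (Rt Q)) < \<xi> \<and> \<xi> < max (Rt Q) (BB k l r (Rt Q)) \<and>
     hh Q = PSx d Q \<xi> * (Rt Q - BB k l r (Rt Q))"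
proof -
  let ?A = "Rt Q" and ?B = "BB k l r (Rt Q)"
  have ne: "?A \<noteq> ?B" using AB_sign[OF assms, of Q] by auto
  have Ap: "?A > 0" using Rt_props(1) by simp
  have Bp: "?B > 0" using B_pos[OF Rt_props(2)] by simp
  obtain \<xi> where \<xi>: "min ?A ?B < \<xi>" "\<xi> < max ?A ?B" "PS d Q ?B - PS d Q ?A = PSx d Q \<xi> * (?B - ?A)"
  proof -
    have "\<exists>\<xi>. min ?A ?B < \<xi> \<and> \<xi> < max ?A ?B \<and> PS d Q ?B - PS d Q ?A = PSx d Q \<xi> * (?B - ?A)"
    proof (rule mvt_open[OF ne])
      fix x assume "min ?A ?B \<le> x" "x \<le> max ?A ?B"
      then have "x > 0" using Ap Bp by (auto simp: min_def split: if_splits)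
      then show "(PS d Q has_real_derivative PSx d Q x) (at x)" using D_PS_x[OF dlt] by simp
    qed
    then show ?thesis using that by blast
  qed
  have "hh Q = PSx d Q \<xi> * (?A - ?B)" unfolding hh_def GQ_def using \<xi>(3) by (simp add: algebra_simps)
  then show ?thesis using \<xi> by blast
qed

lemma hh_pos_side: assumes "d \<noteq> 0" "d * Q \<ge> 0" "l \<noteq> r"
  shows "hh Q * d * (l - r) > 0"
proof -
  let ?A = "Rt Q" and ?B = "BB k l r (Rt Q)"
  obtain \<xi> where \<xi>: "min ?A ?B < \<xi>" "\<xi> < max ?A ?B" "hh Q = PSx d Q \<xi> * (?A - ?B)"
    using hh_mvt[OF assms(3)] by blast
  have Ap: "?A > 0" using Rt_props(1) by simp
  have Bp: "?B > 0" using B_pos[OF Rt_props(2)] by simp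
  have xp: "\<xi> > 0" using \<xi>(1) Ap Bp by (auto simp: min_def split: if_splits)
  obtain p where p: "p > 0" "PSx d Q \<xi> = p * (d * SS Q \<xi> + Q)" using PSx_fac[OF dlt xp] by blast
  have "d * (d * SS Q \<xi> + Q) = d\<^sup>2 * SS Q \<xi> + d * Q" by (simp add: algebra_simps power2_eq_square)
  moreover have "d\<^sup>2 * SS Q \<xi> > 0" using assms(1) SS_pos[of \<xi> Q] xp by simp
  ultimately have dm: "d * (d * SS Q \<xi> + Q) > 0" using assms(2) by linarith
  have e: "hh Q * d * (l - r) = p * (d * (d * SS Q \<xi> + Q)) * ((?A - ?B) * (l - r))"
    unfolding \<xi>(3) p(2) by (simp add: algebra_simps)
  show ?thesis unfolding e using p(1) dm AB_sign[OF assms(3), of Q] by simp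
qed

lemma hh_far: assumes "d \<noteq> 0" "d * Q < 0" "d\<^sup>2 * (Q\<^sup>2 + (l + r)\<^sup>2) < Q\<^sup>2" "l \<noteq> r"
  shows "hh Q * d * (l - r) < 0"
proof -
  let ?A = "Rt Q" and ?B = "BB k l r (Rt Q)"
  obtain \<xi> where \<xi>: "min ?A ?B < \<xi>" "\<xi> < max ?A ?B" "hh Q = PSx d Q \<xi> * (?A - ?B)"
    using hh_mvt[OF assms(4)] by blast
  have Ap: "?A > 0" using Rt_props(1) by simp
  have Bp: "?B > 0" using B_pos[OF Rt_props(2)] by simp
  have xp: "\<xi> > 0" using \<xi>(1) Ap Bp by (auto simp: min_def split: if_splits)
  have xl: "\<xi> \<le> l + r" using \<xi>(2) AB_bounds[of Q] by (auto simp: max_def split: if_splits)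
  obtain p where p: "p > 0" "PSx d Q \<xi> = p * (d * SS Q \<xi> + Q)" using PSx_fac[OF dlt xp] by blast
  have "\<xi>\<^sup>2 \<le> (l + r)\<^sup>2" using xp xl by (intro power_mono) auto
  then have "d\<^sup>2 * (Q\<^sup>2 + \<xi>\<^sup>2) \<le> d\<^sup>2 * (Q\<^sup>2 + (l + r)\<^sup>2)" by (intro mult_left_mono) auto
  then have "(\<bar>d\<bar> * SS Q \<xi>)\<^sup>2 < \<bar>Q\<bar>\<^sup>2" using assms(3) by (simp add: power_mult_distrib SS_sq)
  then have lt: "\<bar>d\<bar> * SS Q \<xi> < \<bar>Q\<bar>" by (rule power2_less_imp_less) simp
  have ad: "\<bar>d\<bar> > 0" using assms(1) by simp
  have "\<bar>d\<bar> * (\<bar>d\<bar> * SS Q \<xi>) < \<bar>d\<bar> * \<bar>Q\<bar>" using lt ad by (rule mult_strict_left_mono)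
  moreover have "d * Q = - (\<bar>d\<bar> * \<bar>Q\<bar>)" using assms(2) by (simp add: abs_mult[symmetric])
  moreover have "d * (d * SS Q \<xi> + Q) = \<bar>d\<bar> * (\<bar>d\<bar> * SS Q \<xi>) + d * Q"
    by (simp add: algebra_simps abs_mult_self_eq)
  ultimately have dm: "d * (d * SS Q \<xi> + Q) < 0" by linarith
  have e: "hh Q * d * (l - r) = p * ((d * (d * SS Q \<xi> + Q)) * ((?A - ?B) * (l - r)))"
    unfolding \<xi>(3) p(2) by (simp add: algebra_simps)
  have "(d * (d * SS Q \<xi> + Q)) * ((?A - ?B) * (l - r)) < 0"
    using dm AB_sign[OF assms(4), of Q] by (simp add: mult_neg_pos)
  then show ?thesis unfolding e using p(1) by (simp add: mult_pos_neg)
qed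

lemma xPSx_sign: assumes "x > 0" shows "d * (x * PSx d Q x) > 0 \<longleftrightarrow> d * (d * SS Q x + Q) > 0"
    "d * (x * PSx d Q x) < 0 \<longleftrightarrow> d * (d * SS Q x + Q) < 0"
proof -
  obtain p where p: "p > 0" "PSx d Q x = p * (d * SS Q x + Q)" using PSx_fac[OF dlt assms] by blast
  have e: "d * (x * PSx d Q x) = (x * p) * (d * (d * SS Q x + Q))" unfolding p(2) by (simp add: algebra_simps)
  have xp: "x * p > 0" using assms p(1) by simp
  show "d * (x * PSx d Q x) > 0 \<longleftrightarrow> d * (d * SS Q x + Q) > 0" unfolding e
    using mult_less_cancel_left_pos[OF xp, of 0] by simp
  show "d * (x * PSx d Q x) < 0 \<longleftrightarrow> d * (d * SS Q x + Q) < 0" unfolding e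
    using mult_less_cancel_left_pos[OF xp, of _ 0] by simp
qed

lemma hh_zero: assumes "d \<noteq> 0" "l \<noteq> r" "hh Q = 0"
  shows "d * Q < 0" "GQQ d k l r Q (Rt Q) * (l - r) > 0"
proof -
  let ?A = "Rt Q" and ?B = "BB k l r (Rt Q)"
  obtain \<xi> where \<xi>: "min ?A ?B < \<xi>" "\<xi> < max ?A ?B" "hh Q = PSx d Q \<xi> * (?A - ?B)"
    using hh_mvt[OF assms(2)] by blast
  have Ap: "?A > 0" using Rt_props(1) by simp
  have Bp: "?B > 0" using B_pos[OF Rt_props(2)] by simp
  have xp: "\<xi> > 0" using \<xi>(1) Ap Bp by (auto simp: min_def split: if_splits)
  have ne: "?A \<noteq> ?B" using AB_sign[OF assms(2), of Q] by auto
  obtain p where p: "p > 0" "PSx d Q \<xi> = p * (d * SS Q \<xi> + Q)" using PSx_fac[OF dlt xp] by blast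
  have "PSx d Q \<xi> = 0" using \<xi>(3) assms(3) ne by simp
  then have m0: "d * SS Q \<xi> + Q = 0" using p by simp
  have "d * (d * SS Q \<xi> + Q) = 0" using m0 by simp
  then have dQe: "d * Q = - (d\<^sup>2 * SS Q \<xi>)" by (simp add: algebra_simps power2_eq_square)
  have Sx: "SS Q \<xi> > 0" using SS_pos xp by simp
  have d2: "d\<^sup>2 > 0" using assms(1) by simp
  show dQ: "d * Q < 0" unfolding dQe using d2 Sx by simp
  have dm: "d * (d * SS Q x + Q) = d\<^sup>2 * (SS Q x - SS Q \<xi>)" for x
  proof -
    have "d * (d * SS Q x + Q) = d\<^sup>2 * SS Q x + d * Q" by (simp add: algebra_simps power2_eq_square)
    then show ?thesis unfolding dQe by (simp add: algebra_simps)
  qed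
  have hi: "d * (d * SS Q x + Q) > 0" if "\<xi> < x" for x
  proof -
    have "SS Q \<xi> < SS Q x" using SS_mono[of \<xi> x Q] xp that by simp
    then show ?thesis unfolding dm using d2 by simp
  qed
  have lo: "d * (d * SS Q x + Q) < 0" if "0 \<le> x" "x < \<xi>" for x
  proof -
    have "SS Q x < SS Q \<xi>" using SS_mono[of x \<xi> Q] that by simp
    then show ?thesis unfolding dm using d2 by (simp add: mult_pos_neg)
  qed
  have eA: "?A * PSx d Q ?A + Q * PSQ d Q ?A = d" using euler[OF dlt] Ap by simp
  have eB: "?B * PSx d Q ?B + Q * PSQ d Q ?B = d" using euler[OF dlt] Bp by simp
  have QG: "d * Q * GQQ d k l r Q ?A = d * (?B * PSx d Q ?B) - d * (?A * PSx d Q ?A)"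
  proof -
    have a: "Q * PSQ d Q ?A = d - ?A * PSx d Q ?A" using eA by linarith
    have b: "Q * PSQ d Q ?B = d - ?B * PSx d Q ?B" using eB by linarith
    have "d * Q * GQQ d k l r Q ?A = d * (Q * PSQ d Q ?A - Q * PSQ d Q ?B)"
      unfolding GQQ_def by (simp add: algebra_simps)
    also have "\<dots> = d * (?B * PSx d Q ?B) - d * (?A * PSx d Q ?A)" unfolding a b by (simp add: algebra_simps)
    finally show ?thesis .
  qed
  show "GQQ d k l r Q (Rt Q) * (l - r) > 0"
  proof (cases "?B < ?A")
    case True
    then have "\<xi> < ?A" "?B < \<xi>" using \<xi> by (auto simp: min_def max_def split: if_splits)
    then have "d * (?A * PSx d Q ?A) > 0" "d * (?B * PSx d Q ?B) < 0"
      using xPSx_sign[OF Ap] xPSx_sign[OF Bp] hi lo Bp by auto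
    then have "d * Q * GQQ d k l r Q ?A < 0" unfolding QG by simp
    then have G: "GQQ d k l r Q ?A > 0" using dQ by (simp add: mult_less_0_iff)
    have "l - r > 0" using AB_sign[OF assms(2), of Q] True by (simp add: zero_less_mult_iff)
    then show ?thesis using G by simp
  next
    case False
    then have "?A < ?B" using ne by simp
    then have "\<xi> < ?B" "?A < \<xi>" using \<xi> by (auto simp: min_def max_def split: if_splits)
    then have "d * (?B * PSx d Q ?B) > 0" "d * (?A * PSx d Q ?A) < 0"
      using xPSx_sign[OF Ap] xPSx_sign[OF Bp] hi lo Ap by auto
    then have "d * Q * GQQ d k l r Q ?A > 0" unfolding QG by simp
    then have G: "GQQ d k l r Q ?A < 0" using dQ zero_less_mult_iff[of "d * Q" "GQQ d k l r Q ?A"] by auto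
    have "l - r < 0" using AB_sign[OF assms(2), of Q] \<open>?A < ?B\<close> by (simp add: zero_less_mult_iff)
    then show ?thesis using G by (simp add: mult_neg_neg)
  qed
qed

lemma Rt_near: assumes "0 < a" "a < l + r / k" shows "\<bar>Rt Q - a\<bar> \<le> \<bar>GF d k l r Q a\<bar>"
proof (cases "a \<le> Rt Q")
  case True
  have "GF d k l r Q (Rt Q) + Rt Q \<le> GF d k l r Q a + a"
    using GF_slope[OF assms(1) True Rt_props(2)] .
  then show ?thesis using True Rt_props(3)[of Q] by simp
next
  case False
  have "GF d k l r Q a + a \<le> GF d k l r Q (Rt Q) + Rt Q"
    using GF_slope[OF Rt_props(1)] False assms(2) by simp
  then show ?thesis using False Rt_props(3)[of Q] by simp
qed

lemma Rt_lim: "(Rt \<longlongrightarrow> l) at_top" "(Rt \<longlongrightarrow> l) at_bot"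
proof -
  define C where "C = \<bar>l - r\<bar> * max l r / (1 - \<bar>d\<bar>)"
  have b: "norm (Rt Q - l) \<le> C / \<bar>Q\<bar>" if "Q \<noteq> 0" for Q
  proof -
    have "norm (Rt Q - l) \<le> \<bar>FF d Q l - FF d Q r\<bar>" using Rt_near[OF lpos l_dom, of Q] GF_l by simp
    also have "\<dots> \<le> \<bar>l - r\<bar> * max l r / ((1 - \<bar>d\<bar>) * \<bar>Q\<bar>)" by (rule FF_bound[OF dlt that lpos rpos])
    also have "\<dots> = C / \<bar>Q\<bar>" unfolding C_def by simp
    finally show ?thesis .
  qed
  have et: "eventually (\<lambda>Q::real. Q \<noteq> 0) at_top" unfolding eventually_at_top_dense by (intro exI[of _ 0]) auto
  have eb: "eventually (\<lambda>Q::real. Q \<noteq> 0) at_bot" unfolding eventually_at_bot_dense by (intro exI[of _ 0]) auto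
  have "((\<lambda>Q. Rt Q - l) \<longlongrightarrow> 0) at_top"
    by (rule Lim_null_comparison[OF eventually_mono[OF et b] lim_inv_abs(1)])
  then show "(Rt \<longlongrightarrow> l) at_top" by (simp add: LIM_zero_iff)
  have "((\<lambda>Q. Rt Q - l) \<longlongrightarrow> 0) at_bot"
    by (rule Lim_null_comparison[OF eventually_mono[OF eb b] lim_inv_abs(2)])
  then show "(Rt \<longlongrightarrow> l) at_bot" by (simp add: LIM_zero_iff)
qed

lemma hh_pattern: assumes "d \<noteq> 0" "l \<noteq> r" "hh q = 0"
  shows "\<And>Q. Q > q \<Longrightarrow> hh Q * (l - r) > 0" "\<And>Q. Q < q \<Longrightarrow> hh Q * (l - r) < 0"
proof -
  have zd: "\<exists>D. (hh has_real_derivative D) (at z) \<and> D * (l - r) > 0" if "hh z = 0" for z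
    using hh_deriv_zero[OF that] hh_zero(2)[OF assms(1,2) that] by blast
  show "\<And>Q. Q > q \<Longrightarrow> hh Q * (l - r) > 0" using sign_right[OF hh_cont zd assms(3)] by blast
  show "\<And>Q. Q < q \<Longrightarrow> hh Q * (l - r) < 0" using sign_left[OF hh_cont zd assms(3)] by blast
qed

lemma hh_zero_exists: assumes "d \<noteq> 0" "l \<noteq> r" shows "\<exists>q. hh q = 0"
proof -
  define W where "W = l + r"
  define T where "T = (W + 1) / (1 - d\<^sup>2)"
  define Qf where "Qf = - d * T"
  have d2: "0 < d\<^sup>2" "d\<^sup>2 < 1" using assms(1) dlt by (auto simp: abs_square_less_1)
  have Wp: "W > 0" unfolding W_def using lpos rpos by simp
  have TW: "T * (1 - d\<^sup>2) = W + 1" unfolding T_def using d2 by simp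
  have Tge: "T \<ge> W + 1" unfolding T_def using d2 Wp by (simp add: le_divide_eq)
  have Tp: "T > 0" using Tge Wp by simp
  have dQf: "d * Qf < 0" unfolding Qf_def using d2 Tp by (simp add: power2_eq_square mult.assoc[symmetric])
  have "W\<^sup>2 < (W + 1)\<^sup>2" using Wp by (simp add: power2_eq_square algebra_simps)
  also have "\<dots> \<le> T * (W + 1)" using Tge Wp by (simp add: power2_eq_square mult_right_mono)
  also have "\<dots> = T * (T * (1 - d\<^sup>2))" using TW by simp
  also have "\<dots> = T\<^sup>2 * (1 - d\<^sup>2)" by (simp add: power2_eq_square)
  finally have "d\<^sup>2 * T\<^sup>2 + W\<^sup>2 < T\<^sup>2" by (simp add: algebra_simps)
  then have "d\<^sup>2 * (d\<^sup>2 * T\<^sup>2 + W\<^sup>2) < d\<^sup>2 * T\<^sup>2" using d2 by simp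
  then have far: "d\<^sup>2 * (Qf\<^sup>2 + (l + r)\<^sup>2) < Qf\<^sup>2" unfolding Qf_def W_def by (simp add: power_mult_distrib)
  define c where "c = d * (l - r)"
  define g where "g x = hh x * c" for x
  have gc: "\<And>x. isCont g x" unfolding g_def by (intro continuous_intros hh_cont)
  have g0: "g 0 > 0" unfolding g_def c_def using hh_pos_side[OF assms(1) _ assms(2), of 0] by (simp add: mult.assoc)
  have gf: "g Qf < 0" unfolding g_def c_def using hh_far[OF assms(1) dQf far assms(2)] by (simp add: mult.assoc)
  have "\<exists>x. g x = 0"
  proof (cases "Qf \<le> 0")
    case True
    then show ?thesis using IVT[of g Qf 0 0] gf g0 gc by force
  next
    case False
    then show ?thesis using IVT2[of g Qf 0 0] gf g0 gc by force
  qed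
  then obtain q where "g q = 0" by blast
  moreover have "c \<noteq> 0" unfolding c_def using assms by simp
  ultimately have "hh q = 0" unfolding g_def by simp
  then show ?thesis by blast
qed

lemma deriv_Rt: "deriv Rt Q = Rd Q" by (rule DERIV_imp_deriv[OF Rt_deriv])

lemma sgn_Rd: "sgn (Rd Q) = sgn (hh Q)"
proof -
  have G: "GA d k l r Q (Rt Q) < 0" using GA_le[OF Rt_props(1)[of Q] Rt_props(2)[of Q], of Q] by linarith
  have "Rd Q = hh Q * (- 1 / GA d k l r Q (Rt Q))" unfolding Rd_def hh_def by simp
  moreover have "- 1 / GA d k l r Q (Rt Q) > 0" using G by simp
  ultimately show ?thesis by (simp add: sgn_mult)
qed

lemma sgn_pos_prod: "(x::real) * y > 0 \<Longrightarrow> sgn x = sgn y"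
  by (auto simp: zero_less_mult_iff sgn_if)

lemma sgn_neg_prod: "(x::real) * y < 0 \<Longrightarrow> sgn x = - sgn y"
  by (auto simp: mult_less_0_iff sgn_if)

lemma mono_pattern:
  assumes P1: "\<And>Q. Q > q \<Longrightarrow> sgn (deriv Rt Q) = sgn (l - r)"
    and P2: "\<And>Q. Q < q \<Longrightarrow> sgn (deriv Rt Q) = - sgn (l - r)"
  shows "l < r \<Longrightarrow> Rt Q \<le> Rt q" "r < l \<Longrightarrow> Rt q \<le> Rt Q"
proof -
  have der: "\<And>x. (Rt has_real_derivative Rd x) (at x)" by (rule Rt_deriv)
  have s1: "\<And>z. z > q \<Longrightarrow> sgn (Rd z) = sgn (l - r)" using P1 deriv_Rt by simp
  have s2: "\<And>z. z < q \<Longrightarrow> sgn (Rd z) = - sgn (l - r)" using P2 deriv_Rt by simp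
  have R: "\<exists>z. q < z \<and> z < Q \<and> Rt Q - Rt q = (Q - q) * Rd z" if "q < Q"
    using MVT2[OF that der] by blast
  have L: "\<exists>z. Q < z \<and> z < q \<and> Rt q - Rt Q = (q - Q) * Rd z" if "Q < q"
    using MVT2[OF that der] by blast
  show "l < r \<Longrightarrow> Rt Q \<le> Rt q"
  proof -
    assume lr: "l < r"
    consider "q < Q" | "Q = q" | "Q < q" by linarith
    then show ?thesis
    proof cases
      case 1
      then obtain z where z: "q < z" "Rt Q - Rt q = (Q - q) * Rd z" using R by blast
      have "sgn (Rd z) = -1" using s1[OF z(1)] lr by simp
      then have "Rd z < 0" by (simp add: sgn_1_neg)
      then have "(Q - q) * Rd z < 0" using 1 by (simp add: mult_pos_neg)
      then show ?thesis using z(2) by simp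
    next
      case 2 then show ?thesis by simp
    next
      case 3
      then obtain z where z: "z < q" "Rt q - Rt Q = (q - Q) * Rd z" using L by blast
      have "sgn (Rd z) = 1" using s2[OF z(1)] lr by simp
      then have "Rd z > 0" by (simp add: sgn_1_pos)
      then have "(q - Q) * Rd z > 0" using 3 by simp
      then show ?thesis using z(2) by simp
    qed
  qed
  show "r < l \<Longrightarrow> Rt q \<le> Rt Q"
  proof -
    assume lr: "r < l"
    consider "q < Q" | "Q = q" | "Q < q" by linarith
    then show ?thesis
    proof cases
      case 1
      then obtain z where z: "q < z" "Rt Q - Rt q = (Q - q) * Rd z" using R by blast
      have "sgn (Rd z) = 1" using s1[OF z(1)] lr by simp
      then have "Rd z > 0" by (simp add: sgn_1_pos)
      then have "(Q - q) * Rd z > 0" using 1 by simp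
      then show ?thesis using z(2) by simp
    next
      case 2 then show ?thesis by simp
    next
      case 3
      then obtain z where z: "z < q" "Rt q - Rt Q = (q - Q) * Rd z" using L by blast
      have "sgn (Rd z) = -1" using s2[OF z(1)] lr by simp
      then have "Rd z < 0" by (simp add: sgn_1_neg)
      then have "(q - Q) * Rd z < 0" using 3 by (simp add: mult_pos_neg)
      then show ?thesis using z(2) by simp
    qed
  qed
qed

lemma hh_eq: "l = r \<Longrightarrow> hh Q = 0"
  unfolding hh_def GQ_def using Rt_eq[of Q] by (simp add: BB_def)

lemma master:
  fixes \<alpha> \<beta> :: real
  assumes dne: "d \<noteq> 0" and ab: "0 < \<alpha>" "\<beta> < 1" and kdef: "k = (1 - \<beta>) / \<alpha>"
  shows "(\<forall>Q0. \<exists>!A. 0 < A \<and> A < AM l r \<alpha> \<beta> \<and> G2 l r \<alpha> \<beta> Q0 A d = 0)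
    \<and> (Aroot l r \<alpha> \<beta> d \<longlongrightarrow> l) at_top
    \<and> (Aroot l r \<alpha> \<beta> d \<longlongrightarrow> l) at_bot
    \<and> (\<forall>Q0. Aroot l r \<alpha> \<beta> d differentiable at Q0)
    \<and> (\<exists>q. is_Qstar l r \<alpha> \<beta> d q)
    \<and> (\<forall>q. is_Qstar l r \<alpha> \<beta> d q \<longrightarrow>
         (\<forall>Q0.
           (l < r \<longrightarrow> l \<le> Aroot l r \<alpha> \<beta> d Q0 \<and> Aroot l r \<alpha> \<beta> d Q0 \<le> Aroot l r \<alpha> \<beta> d q)
         \<and> (l > r \<longrightarrow> Aroot l r \<alpha> \<beta> d q \<le> Aroot l r \<alpha> \<beta> d Q0 \<and> Aroot l r \<alpha> \<beta> d Q0 \<le> l)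
         \<and> (l = r \<longrightarrow> Aroot l r \<alpha> \<beta> d Q0 = l \<and> l = r \<and> r = Aroot l r \<alpha> \<beta> d q)))"
proof -
  have AMe: "AM l r \<alpha> \<beta> = l + r / k" unfolding AM_def kdef using ab by (simp add: field_simps)
  have Bqe: "Bq l r \<alpha> \<beta> A = BB k l r A" for A unfolding Bq_def BB_def kdef by simp
  have G2e: "G2 l r \<alpha> \<beta> Q A d = GF d k l r Q A" if "0 < A" "A < l + r / k" for Q A
  proof -
    have ua: "SS Q A + d * Q > 0" using u_pos[OF dlt] that by simp
    have ub: "SS Q (BB k l r A) + d * Q > 0" using u_pos[OF dlt] B_pos[OF that(2)] by simp
    have SaE: "Sa Q A = SS Q A" unfolding Sa_def SS_def by simp
    have SbE: "Sb l r \<alpha> \<beta> Q A = SS Q (BB k l r A)" unfolding Sb_def SS_def Bqe by simp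
    show ?thesis unfolding G2_def Nq_def SaE SbE GF_def FF_def using ua ub
      by (simp add: ln_div algebra_simps)
  qed
  have ex1: "\<exists>!A. 0 < A \<and> A < AM l r \<alpha> \<beta> \<and> G2 l r \<alpha> \<beta> Q0 A d = 0" for Q0
  proof (rule ex1I[of _ "Rt Q0"])
    show "0 < Rt Q0 \<and> Rt Q0 < AM l r \<alpha> \<beta> \<and> G2 l r \<alpha> \<beta> Q0 (Rt Q0) d = 0"
      using Rt_props(1-3)[of Q0] G2e[OF Rt_props(1,2)] AMe by simp
    show "\<And>A. 0 < A \<and> A < AM l r \<alpha> \<beta> \<and> G2 l r \<alpha> \<beta> Q0 A d = 0 \<Longrightarrow> A = Rt Q0"
      using Rt_unique G2e AMe by auto
  qed
  have AR: "Aroot l r \<alpha> \<beta> d = Rt"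
  proof
    fix Q0
    show "Aroot l r \<alpha> \<beta> d Q0 = Rt Q0" unfolding Aroot_def
    proof (rule the_equality)
      show "0 < Rt Q0 \<and> Rt Q0 < AM l r \<alpha> \<beta> \<and> G2 l r \<alpha> \<beta> Q0 (Rt Q0) d = 0"
        using Rt_props(1-3)[of Q0] G2e[OF Rt_props(1,2)] AMe by simp
      show "\<And>A. 0 < A \<and> A < AM l r \<alpha> \<beta> \<and> G2 l r \<alpha> \<beta> Q0 A d = 0 \<Longrightarrow> A = Rt Q0"
        using Rt_unique G2e AMe by auto
    qed
  qed
  have QS: "is_Qstar l r \<alpha> \<beta> d q \<longleftrightarrow> (if d > 0 then q < 0 else q > 0)
      \<and> (\<forall>Q>q. sgn (deriv Rt Q) = sgn (l - r)) \<and> (\<forall>Q<q. sgn (deriv Rt Q) = - sgn (l - r))" for q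
    unfolding is_Qstar_def AR by auto
  have diff: "\<forall>Q0. Rt differentiable at Q0"
    using Rt_deriv real_differentiable_def by blast
  have exq: "\<exists>q. is_Qstar l r \<alpha> \<beta> d q"
  proof (cases "l = r")
    case True
    have "sgn (deriv Rt Q) = 0" for Q unfolding deriv_Rt sgn_Rd hh_eq[OF True] by simp
    then have "is_Qstar l r \<alpha> \<beta> d (- d)" unfolding QS using True dne by auto
    then show ?thesis by blast
  next
    case False
    obtain q where hq: "hh q = 0" using hh_zero_exists[OF dne False] by blast
    have dq: "d * q < 0" using hh_zero(1)[OF dne False hq] .
    have "sgn (deriv Rt Q) = sgn (l - r)" if "Q > q" for Q
      unfolding deriv_Rt sgn_Rd using sgn_pos_prod[OF hh_pattern(1)[OF dne False hq that]] .
    moreover have "sgn (deriv Rt Q) = - sgn (l - r)" if "Q < q" for Q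
      unfolding deriv_Rt sgn_Rd using sgn_neg_prod[OF hh_pattern(2)[OF dne False hq that]] .
    moreover have "if d > 0 then q < 0 else q > 0" using dq dne by (auto simp: mult_less_0_iff)
    ultimately have "is_Qstar l r \<alpha> \<beta> d q" unfolding QS by blast
    then show ?thesis by blast
  qed
  have fin: "(l < r \<longrightarrow> l \<le> Rt Q0 \<and> Rt Q0 \<le> Rt q)
         \<and> (l > r \<longrightarrow> Rt q \<le> Rt Q0 \<and> Rt Q0 \<le> l)
         \<and> (l = r \<longrightarrow> Rt Q0 = l \<and> l = r \<and> r = Rt q)" if "is_Qstar l r \<alpha> \<beta> d q" for q Q0
  proof -
    have P1: "\<And>Q. Q > q \<Longrightarrow> sgn (deriv Rt Q) = sgn (l - r)" and
      P2: "\<And>Q. Q < q \<Longrightarrow> sgn (deriv Rt Q) = - sgn (l - r)" using that unfolding QS by auto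
    have a: "l \<le> Rt Q0" if "l < r" using Rt_props(4)[of Q0] As_cmp(1) that by (auto simp: min_def split: if_splits)
    have b: "Rt Q0 \<le> l" if "r < l" using Rt_props(5)[of Q0] As_cmp(2) that by (auto simp: max_def split: if_splits)
    have m: "l < r \<Longrightarrow> Rt Q0 \<le> Rt q" "r < l \<Longrightarrow> Rt q \<le> Rt Q0"
      using mono_pattern[where q=q and Q=Q0, OF P1 P2] by auto
    show ?thesis using a b m Rt_eq by auto
  qed
  show ?thesis unfolding AR using ex1 Rt_lim diff exq fin by blast
qed

end


theorem theorem3p8:
  fixes l r \<alpha> \<beta> D1 D2 \<delta> :: real
  assumes "l > 0" and "r > 0"
    and "0 < \<alpha>" and "\<alpha> < \<beta>" and "\<beta> < 1"
    and "D1 > 0" and "D2 > 0" and "D1 \<noteq> D2"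
    and "\<delta> = (D2 - D1) / (D2 + D1)"
  shows "(\<forall>Q0. \<exists>!A. 0 < A \<and> A < AM l r \<alpha> \<beta> \<and> G2 l r \<alpha> \<beta> Q0 A \<delta> = 0)
    \<and> (Aroot l r \<alpha> \<beta> \<delta> \<longlongrightarrow> l) at_top
    \<and> (Aroot l r \<alpha> \<beta> \<delta> \<longlongrightarrow> l) at_bot
    \<and> (\<forall>Q0. Aroot l r \<alpha> \<beta> \<delta> differentiable at Q0)
    \<and> (\<exists>q. is_Qstar l r \<alpha> \<beta> \<delta> q)
    \<and> (\<forall>q. is_Qstar l r \<alpha> \<beta> \<delta> q \<longrightarrow>
         (\<forall>Q0.
           (l < r \<longrightarrow> l \<le> Aroot l r \<alpha> \<beta> \<delta> Q0 \<and> Aroot l r \<alpha> \<beta> \<delta> Q0 \<le> Aroot l r \<alpha> \<beta> \<delta> q)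
         \<and> (l > r \<longrightarrow> Aroot l r \<alpha> \<beta> \<delta> q \<le> Aroot l r \<alpha> \<beta> \<delta> Q0 \<and> Aroot l r \<alpha> \<beta> \<delta> Q0 \<le> l)
         \<and> (l = r \<longrightarrow> Aroot l r \<alpha> \<beta> \<delta> Q0 = l \<and> l = r \<and> r = Aroot l r \<alpha> \<beta> \<delta> q)))"
proof -
  have k: "(1 - \<beta>) / \<alpha> > 0" using assms(3,5) by simp
  have s: "D2 + D1 > 0" using assms(6,7) by simp
  have "\<bar>D2 - D1\<bar> < D2 + D1" using assms(6,7) by (simp add: abs_less_iff)
  moreover have "\<bar>\<delta>\<bar> = \<bar>D2 - D1\<bar> / (D2 + D1)" using assms(9) s by (simp add: abs_divide)
  ultimately have dl: "\<bar>\<delta>\<bar> < 1" using s by (simp add: divide_less_eq_1_pos)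
  have "D2 - D1 \<noteq> 0" using assms(8) by simp
  then have dn: "\<delta> \<noteq> 0" using assms(9) s by simp
  show ?thesis using master[OF assms(1,2) k dl dn assms(3,5) refl] .
qed

end
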